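(* Let $f \in \mathbb{Z}[T, Y]$ be monic in $Y$, of degree $d_T$ in $T$ and degree $d_Y$ in $Y$. Let $t = a/b \in \mathbb{Q}$ be written in lowest terms, and let $y \in \mathbb{Q}$ satisfy $f(t, y) = 0$. Then $y = c / b^{d_T}$ for some $c \in \mathbb{Z}$ with $|c| \leq 2 (d_T + 1) \|f\| H(t)^{d_T}$.
   Context: Monic in $Y$ means the leading coefficient of $f$ as a polynomial in $Y$ over $\mathbb{Z}[T]$ is $1$. The height of $t = a/b$ in lowest terms is $H(t) = \max(|a|,|b|)$. For a nonzero integer polynomial $f$, $\|f\|$ is the maximum of $2$ and the absolute values of its coefficients. *)

theory Defs
  imports "HOL-Computational_Algebra.Polynomial"
begin

text \<open>A bivariate integer polynomial f in Z[T,Y] is represented as a polynomial in Y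
  whose coefficients are polynomials in T: type int poly poly.\<close>

definition bivar_eval :: "int poly poly \<Rightarrow> rat \<Rightarrow> rat \<Rightarrow> rat" where
  "bivar_eval f t y = poly (map_poly (\<lambda>p. poly (map_poly rat_of_int p) t) f) y"

definition degT :: "int poly poly \<Rightarrow> nat" where
  "degT f = Max {degree (coeff f i) | i. i \<le> degree f}"

definition monic_Y :: "int poly poly \<Rightarrow> bool" where
  "monic_Y f \<longleftrightarrow> lead_coeff f = 1"

definition bnorm :: "int poly poly \<Rightarrow> int" where
  "bnorm f = Max (insert 2 {\<bar>coeff (coeff f i) j\<bar> | i j. i \<le> degree f \<and> j \<le> degree (coeff f i)})"

definition rat_height :: "rat \<Rightarrow> int" where
  "rat_height t = (case quotient_of t of (a, b) \<Rightarrow> max \<bar>a\<bar> \<bar>b\<bar>)"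

end

theory Submission
  imports Defs
begin

lemma poly_sum_le:
  fixes x :: "'a::comm_semiring_1"
  assumes "degree p \<le> m"
  shows "poly p x = (\<Sum>i\<le>m. coeff p i * x ^ i)"
proof -
  have "poly p x = (\<Sum>i\<le>degree p. coeff p i * x ^ i)" by (rule poly_altdef)
  also have "\<dots> = (\<Sum>i\<le>m. coeff p i * x ^ i)"
    by (rule sum.mono_neutral_left) (use assms in \<open>auto intro!: le_degree\<close>)
  finally show ?thesis .
qed

lemma geo_bound:
  fixes M x :: int
  assumes "M \<ge> 0" "x > 2 * M"
  shows "(\<Sum>i<n. M ^ (n - i) * x ^ i) < x ^ n"
proof (induction n)
  case 0
  then show ?case by simp
next
  case (Suc m)
  have x0: "x > 0" using assms by linarith
  have eq: "(\<Sum>i<Suc m. M ^ (Suc m - i) * x ^ i) = M * ((\<Sum>i<m. M ^ (m - i) * x ^ i) + x ^ m)"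
  proof -
    have "(\<Sum>i<Suc m. M ^ (Suc m - i) * x ^ i) = (\<Sum>i<Suc m. M * (M ^ (m - i) * x ^ i))"
      by (rule sum.cong) (auto simp: Suc_diff_le)
    also have "\<dots> = M * (\<Sum>i<Suc m. M ^ (m - i) * x ^ i)" by (rule sum_distrib_left[symmetric])
    also have "\<dots> = M * ((\<Sum>i<m. M ^ (m - i) * x ^ i) + x ^ m)" by simp
    finally show ?thesis .
  qed
  have "M * ((\<Sum>i<m. M ^ (m - i) * x ^ i) + x ^ m) \<le> M * (2 * x ^ m)"
    using Suc assms by (intro mult_left_mono) auto
  also have "\<dots> < x * x ^ m"
    using assms x0 by (simp add: mult.assoc[symmetric])
  finally show ?case using eq by simp
qed

theorem lemma2p4:
  fixes f :: "int poly poly" and t y :: rat and a b :: int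
  assumes "monic_Y f"
    and "quotient_of t = (a, b)"
    and "bivar_eval f t y = 0"
  shows "\<exists>c :: int. y = of_int c / of_int b ^ degT f \<and>
           \<bar>c\<bar> \<le> 2 * (int (degT f) + 1) * bnorm f * rat_height t ^ degT f"
proof -
  define n where "n = degree f"
  define D where "D = degT f"
  define N where "N = bnorm f"
  define H where "H = rat_height t"
  define P where "P i = poly (map_poly rat_of_int (coeff f i)) t" for i
  have b0: "b > 0" using assms(2) by (rule quotient_of_denom_pos)
  have cop: "coprime a b" using assms(2) by (rule quotient_of_coprime)
  have tdef: "t = of_int a / of_int b" using assms(2) by (rule quotient_of_div)
  have Hdef: "H = max \<bar>a\<bar> \<bar>b\<bar>" using assms(2) by (simp add: H_def rat_height_def)
  have lead: "coeff f n = 1" using assms(1) by (simp add: monic_Y_def n_def)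
  have n1: "n \<ge> 1"
  proof (rule ccontr)
    assume "\<not> n \<ge> 1"
    then have "n = 0" by simp
    then have "f = [:1:]" using lead n_def by (metis degree0_coeffs coeff_pCons_0)
    then show False using assms(3) by (simp add: bivar_eval_def map_poly_def)
  qed
  have degF: "degree (coeff f i) \<le> D" for i
  proof (cases "i \<le> n")
    case True
    have "finite {degree (coeff f i) | i. i \<le> degree f}" by simp
    then show ?thesis using True unfolding D_def degT_def n_def
      by (intro Max_ge) auto
  next
    case False
    then show ?thesis by (simp add: coeff_eq_0 n_def)
  qed
  have fin: "finite {\<bar>coeff (coeff f i) j\<bar> | i j. i \<le> degree f \<and> j \<le> degree (coeff f i)}"
  proof (rule finite_subset)
    show "{\<bar>coeff (coeff f i) j\<bar> | i j. i \<le> degree f \<and> j \<le> degree (coeff f i)}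
      \<subseteq> (\<lambda>(i,j). \<bar>coeff (coeff f i) j\<bar>) ` ({..n} \<times> {..D})"
      using degF by (force simp: n_def intro: order_trans)
  qed auto
  have N2: "N \<ge> 2" unfolding N_def bnorm_def
    using fin by (intro Max_ge) auto
  have Ncoeff: "\<bar>coeff (coeff f i) j\<bar> \<le> N" for i j
  proof (cases "i \<le> n \<and> j \<le> degree (coeff f i)")
    case True
    then show ?thesis unfolding N_def bnorm_def
      using fin by (intro Max_ge) (auto simp: n_def)
  next
    case False
    then have "coeff (coeff f i) j = 0"
      by (auto simp: n_def coeff_eq_0)
    then show ?thesis using N2 by simp
  qed
  define e where "e i = (\<Sum>j\<le>D. coeff (coeff f i) j * a ^ j * b ^ (D - j))" for i
  define B where "B = rat_of_int b ^ D"
  have bq0: "rat_of_int b \<noteq> 0" using b0 by simp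
  have B0: "B \<noteq> 0" using bq0 by (simp add: B_def)
  have eP: "rat_of_int (e i) = B * P i" for i
  proof -
    have "P i = (\<Sum>j\<le>D. rat_of_int (coeff (coeff f i) j) * t ^ j)"
      unfolding P_def
      by (subst poly_sum_le[where m=D]) (auto intro: order_trans[OF map_poly_degree_leq degF] simp: coeff_map_poly)
    then have "B * P i = (\<Sum>j\<le>D. rat_of_int (coeff (coeff f i) j) * (B * t ^ j))"
      by (simp add: sum_distrib_left algebra_simps)
    also have "\<dots> = (\<Sum>j\<le>D. rat_of_int (coeff (coeff f i) j) * (rat_of_int a ^ j * rat_of_int b ^ (D - j)))"
    proof (rule sum.cong[OF refl])
      fix j assume "j \<in> {..D}"
      then have "B = rat_of_int b ^ j * rat_of_int b ^ (D - j)"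
        by (simp add: B_def power_add[symmetric])
      then have "B * t ^ j = rat_of_int a ^ j * rat_of_int b ^ (D - j)"
        using bq0 by (simp add: tdef power_divide)
      then show "rat_of_int (coeff (coeff f i) j) * (B * t ^ j) = rat_of_int (coeff (coeff f i) j) * (rat_of_int a ^ j * rat_of_int b ^ (D - j))"
        by simp
    qed
    also have "\<dots> = rat_of_int (e i)" by (simp add: e_def mult.assoc)
    finally show ?thesis by simp
  qed
  have Pn: "P n = 1" using lead by (simp add: P_def)
  define w where "w = B * y"
  define c where "c i = (b ^ D) ^ (n - 1 - i) * e i" for i
  have beval: "bivar_eval f t y = (\<Sum>i\<le>n. P i * y ^ i)"
    unfolding bivar_eval_def n_def
    by (subst poly_sum_le[where m="degree f"]) (auto simp: map_poly_degree_leq coeff_map_poly P_def)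
  have weq: "w ^ n + (\<Sum>i<n. rat_of_int (c i) * w ^ i) = 0"
  proof -
    have "0 = B ^ n * bivar_eval f t y" using assms(3) by simp
    also have "\<dots> = (\<Sum>i\<le>n. B ^ n * (P i * y ^ i))" by (simp add: beval sum_distrib_left)
    also have "\<dots> = (\<Sum>i<n. B ^ n * (P i * y ^ i)) + B ^ n * y ^ n"
      by (simp add: lessThan_Suc_atMost[symmetric] Pn)
    also have "(\<Sum>i<n. B ^ n * (P i * y ^ i)) = (\<Sum>i<n. rat_of_int (c i) * w ^ i)"
    proof (rule sum.cong[OF refl])
      fix i assume "i \<in> {..<n}"
      then have "n = (n - 1 - i) + 1 + i" by auto
      then have "B ^ n = B ^ (n - 1 - i) * B * B ^ i" by (metis power_add power_one_right)
      then show "B ^ n * (P i * y ^ i) = rat_of_int (c i) * w ^ i"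
        by (simp add: c_def eP w_def B_def power_mult_distrib)
    qed
    also have "B ^ n * y ^ n = w ^ n" by (simp add: w_def power_mult_distrib)
    finally show ?thesis by simp
  qed
  obtain p q where pq: "quotient_of w = (p, q)" by (cases "quotient_of w") auto
  have q0: "q > 0" using pq by (rule quotient_of_denom_pos)
  have copq: "coprime p q" using pq by (rule quotient_of_coprime)
  have wdef: "w = rat_of_int p / rat_of_int q" using pq by (rule quotient_of_div)
  have qq0: "rat_of_int q \<noteq> 0" using q0 by simp
  have inteq: "p ^ n + (\<Sum>i<n. c i * p ^ i * q ^ (n - i)) = 0"
  proof -
    have "rat_of_int q ^ n * (w ^ n + (\<Sum>i<n. rat_of_int (c i) * w ^ i)) = 0" using weq by simp
    then have "rat_of_int q ^ n * w ^ n + (\<Sum>i<n. rat_of_int q ^ n * (rat_of_int (c i) * w ^ i)) = 0"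
      by (simp add: distrib_left sum_distrib_left)
    also have "rat_of_int q ^ n * w ^ n = rat_of_int (p ^ n)"
      using qq0 by (simp add: wdef power_divide)
    also have "(\<Sum>i<n. rat_of_int q ^ n * (rat_of_int (c i) * w ^ i)) = (\<Sum>i<n. rat_of_int (c i * p ^ i * q ^ (n - i)))"
    proof (rule sum.cong[OF refl])
      fix i assume "i \<in> {..<n}"
      then have "rat_of_int q ^ n = rat_of_int q ^ i * rat_of_int q ^ (n - i)"
        by (simp add: power_add[symmetric])
      then show "rat_of_int q ^ n * (rat_of_int (c i) * w ^ i) = rat_of_int (c i * p ^ i * q ^ (n - i))"
        using qq0 by (simp add: wdef power_divide)
    qed
    finally have "rat_of_int (p ^ n + (\<Sum>i<n. c i * p ^ i * q ^ (n - i))) = 0" by simp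
    then show ?thesis by (simp only: of_int_eq_0_iff)
  qed
  have "q dvd (\<Sum>i<n. c i * p ^ i * q ^ (n - i))"
  proof (rule dvd_sum)
    fix i assume "i \<in> {..<n}"
    then have "q dvd q ^ (n - i)" by (intro dvd_power) auto
    then show "q dvd c i * p ^ i * q ^ (n - i)" by simp
  qed
  then have "q dvd p ^ n" using inteq by (metis add.commute add_eq_0_iff dvd_minus_iff)
  then have "is_unit q" using copq
    by (metis coprime_common_divisor coprime_power_left_iff dvd_refl)
  then have q1: "q = 1" using q0 by (simp add: zdvd_imp_le antisym)
  have wp: "w = rat_of_int p" using wdef q1 by simp
  have yval: "y = rat_of_int p / rat_of_int b ^ D"
    using wp B0 by (simp add: w_def B_def field_simps)
  have peq: "p ^ n + (\<Sum>i<n. c i * p ^ i) = 0" using inteq q1 by simp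
  define M where "M = (int D + 1) * N * H ^ D"
  have H1: "H \<ge> 1" using b0 Hdef by linarith
  have HM: "H ^ D \<le> M"
  proof -
    have "1 * 1 \<le> (int D + 1) * N" using N2 by (intro mult_mono) auto
    then have "1 * H ^ D \<le> ((int D + 1) * N) * H ^ D" using H1 by (intro mult_right_mono) auto
    then show ?thesis by (simp add: M_def)
  qed
  have M0: "M \<ge> 0" using HM H1 by (meson order_trans zero_le_one one_le_power)
  have ebound: "\<bar>e i\<bar> \<le> M" for i
  proof -
    have "\<bar>e i\<bar> \<le> (\<Sum>j\<le>D. \<bar>coeff (coeff f i) j * a ^ j * b ^ (D - j)\<bar>)"
      unfolding e_def by (rule sum_abs)
    also have "\<dots> \<le> (\<Sum>j\<le>D. N * H ^ D)"
    proof (rule sum_mono)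
      fix j assume j: "j \<in> {..D}"
      have "\<bar>a\<bar> ^ j * \<bar>b\<bar> ^ (D - j) \<le> H ^ j * H ^ (D - j)"
        using Hdef by (intro mult_mono power_mono) auto
      also have "\<dots> = H ^ D" using j by (simp add: power_add[symmetric])
      finally have ab: "\<bar>a\<bar> ^ j * \<bar>b\<bar> ^ (D - j) \<le> H ^ D" .
      have "\<bar>coeff (coeff f i) j * a ^ j * b ^ (D - j)\<bar> = \<bar>coeff (coeff f i) j\<bar> * (\<bar>a\<bar> ^ j * \<bar>b\<bar> ^ (D - j))"
        by (simp add: abs_mult power_abs)
      also have "\<dots> \<le> N * H ^ D" using Ncoeff ab N2 by (intro mult_mono) auto
      finally show "\<bar>coeff (coeff f i) j * a ^ j * b ^ (D - j)\<bar> \<le> N * H ^ D" .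
    qed
    also have "\<dots> = M" by (simp add: M_def)
    finally show ?thesis .
  qed
  have cbound: "\<bar>c i\<bar> \<le> M ^ (n - i)" if "i < n" for i
  proof -
    have "\<bar>c i\<bar> = \<bar>b ^ D\<bar> ^ (n - 1 - i) * \<bar>e i\<bar>" by (simp add: c_def abs_mult power_abs)
    also have "\<dots> \<le> M ^ (n - 1 - i) * M"
    proof (intro mult_mono power_mono ebound)
      have "\<bar>b ^ D\<bar> \<le> H ^ D" using Hdef by (simp add: power_abs power_mono)
      then show "\<bar>b ^ D\<bar> \<le> M" using HM by simp
    qed (use M0 in auto)
    also have "\<dots> = M ^ (n - i)" using that
      by (metis Suc_diff_Suc diff_Suc_eq_diff_pred power_Suc2)
    finally show ?thesis .
  qed
  have pbound: "\<bar>p\<bar> \<le> 2 * M"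
  proof (rule ccontr)
    assume "\<not> \<bar>p\<bar> \<le> 2 * M"
    then have big: "\<bar>p\<bar> > 2 * M" by simp
    have "\<bar>p\<bar> ^ n = \<bar>\<Sum>i<n. c i * p ^ i\<bar>" using peq
      by (metis abs_minus_cancel add_eq_0_iff power_abs)
    also have "\<dots> \<le> (\<Sum>i<n. \<bar>c i * p ^ i\<bar>)" by (rule sum_abs)
    also have "\<dots> \<le> (\<Sum>i<n. M ^ (n - i) * \<bar>p\<bar> ^ i)"
      by (rule sum_mono) (auto simp: abs_mult power_abs intro!: mult_right_mono cbound)
    also have "\<dots> < \<bar>p\<bar> ^ n" using geo_bound[OF M0 big] .
    finally show False by simp
  qed
  have "\<bar>p\<bar> \<le> 2 * (int D + 1) * N * H ^ D" using pbound unfolding M_def by (simp only: mult.assoc)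
  then show ?thesis
    using yval unfolding D_def N_def H_def by blast
qed

end
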